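(* For every $m\ge1$ and every probability mass function $(g_k)_{k\in\mathbb Z}$ of a sum of $m$ independent Bernoulli random variables (extended by $0$ outside $\{0,\ldots,m\}$), $$g_{k-1}g_k^2-2g_{k-1}^2g_{k+1}+g_kg_{k+1}g_{k-2}\ge0\quad\text{for all }k\in\mathbb Z.$$ *)

theory Defs
  imports "HOL-Probability.Probability"
begin

text \<open>Distribution of the sum of independent Bernoulli random variables with
success probabilities ps (as an int-valued pmf, so its pmf is 0 outside 0..length ps).\<close>
definition bernoulli_sum_pmf :: "real list \<Rightarrow> int pmf" where
  "bernoulli_sum_pmf ps =
     foldr (\<lambda>p D. map_pmf (\<lambda>(b, s). (if b then 1 else 0) + s) (pair_pmf (bernoulli_pmf p) D))
           ps (return_pmf 0)"

end

theory Submission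
  imports Defs
begin

lemma bsum_Nil: "pmf (bernoulli_sum_pmf []) k = (if k = 0 then 1 else 0)"
  by (simp add: bernoulli_sum_pmf_def pmf_return)

lemma bsum_Cons:
  assumes "0 \<le> p" "p \<le> 1"
  shows "pmf (bernoulli_sum_pmf (p # ps)) k
        = (1 - p) * pmf (bernoulli_sum_pmf ps) k + p * pmf (bernoulli_sum_pmf ps) (k - 1)"
proof -
  define D where "D = bernoulli_sum_pmf ps"
  have e: "bernoulli_sum_pmf (p # ps) =
     bind_pmf (bernoulli_pmf p) (\<lambda>b. map_pmf (\<lambda>s. (if b then 1 else 0) + s) D)"
    by (simp add: bernoulli_sum_pmf_def D_def pair_pmf_def map_bind_pmf map_pmf_def bind_assoc_pmf
        bind_return_pmf)
  have m1: "pmf (map_pmf ((+) 1) D) k = pmf D (k - 1)"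
  proof -
    have "pmf (map_pmf ((+) 1) D) (1 + (k - 1)) = pmf D (k - 1)"
      by (rule pmf_map_inj') (auto simp: inj_def)
    then show ?thesis by simp
  qed
  have z: "((+) (0::int)) = id" by auto
  have m0: "pmf (map_pmf ((+) 0) D) k = pmf D k"
    by (simp add: z)
  have "pmf (bernoulli_sum_pmf (p # ps)) k = pmf (map_pmf ((+) 1) D) k * p + pmf (map_pmf ((+) 0) D) k * (1 - p)"
    unfolding e pmf_bind using assms by (simp add: if_distrib cong: if_cong)
  then show ?thesis using m0 m1 by (simp add: D_def algebra_simps)
qed

definition Fv :: "real \<Rightarrow> real \<Rightarrow> real \<Rightarrow> real \<Rightarrow> real" where
  "Fv a b c d = b * c^2 - 2 * b^2 * d + a * c * d"

definition Inv :: "(int \<Rightarrow> real) \<Rightarrow> bool" where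
  "Inv g \<longleftrightarrow> (\<forall>k. 0 \<le> g k) \<and>
     (\<forall>i k j. i \<le> k \<longrightarrow> k \<le> j \<longrightarrow> 0 < g i \<longrightarrow> 0 < g j \<longrightarrow> 0 < g k) \<and>
     (\<forall>k. g (k - 1) * g (k + 1) \<le> (g k)^2) \<and>
     (\<forall>k. 0 \<le> Fv (g (k - 2)) (g (k - 1)) (g k) (g (k + 1)))"

lemma D1_nonneg:
  fixes u a b c d :: real
  assumes "0 \<le> u" "0 \<le> a" "0 \<le> b" "0 \<le> c" "0 \<le> d"
    and F2: "0 \<le> b * c^2 - 2 * b^2 * d + a * c * d"
    and F1: "0 \<le> a * b^2 - 2 * a^2 * c + u * b * c"
  shows "0 \<le> 2 * a * c^2 - 3 * a * b * d + u * c * d"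
proof (cases "b = 0")
  case True
  then show ?thesis using assms by simp
next
  case False
  then have bp: "0 < b" using assms by simp
  have id: "b * (2 * a * c^2 - 3 * a * b * d + u * c * d)
      = 2 * a * (b * c^2 - 2 * b^2 * d + a * c * d) + d * (a * b^2 - 2 * a^2 * c + u * b * c)"
    by (simp add: power2_eq_square algebra_simps)
  have "0 \<le> 2 * a * (b * c^2 - 2 * b^2 * d + a * c * d) + d * (a * b^2 - 2 * a^2 * c + u * b * c)"
    using assms by simp
  then have "0 \<le> b * (2 * a * c^2 - 3 * a * b * d + u * c * d)" using id by simp
  then show ?thesis using bp by (simp add: zero_le_mult_iff)
qed

lemma D2_nonneg:
  fixes u a b c d :: real
  assumes "0 \<le> u" "0 \<le> a" "0 \<le> b" "0 \<le> c" "0 \<le> d"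
    and L1: "a * c \<le> b^2" and L2: "b * d \<le> c^2"
    and F2: "0 \<le> b * c^2 - 2 * b^2 * d + a * c * d"
    and F1: "0 \<le> a * b^2 - 2 * a^2 * c + u * b * c"
    and Z1: "b = 0 \<Longrightarrow> a * d = 0"
    and Z2: "c = 0 \<Longrightarrow> b * d = 0"
  shows "0 \<le> b^3 - a * b * c - 2 * a^2 * d + u * c^2 + u * b * d"
proof (cases "b = 0")
  case True
  then have "a = 0 \<or> d = 0" using Z1 by simp
  then show ?thesis using True assms by auto
next
  case bnz: False
  show ?thesis
  proof (cases "c = 0")
    case True
    then have "d = 0" using Z2 bnz by simp
    then show ?thesis using True assms by simp
  next
    case False
    have bp: "0 < b" "0 < c" using bnz False assms by auto
    define l1 where "l1 = b^2 - a * c"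
    define l2 where "l2 = c^2 - b * d"
    define f1 where "f1 = a * b^2 - 2 * a^2 * c + u * b * c"
    define f2 where "f2 = b * c^2 - 2 * b^2 * d + a * c * d"
    have id: "b^2 * c^2 * (b^3 - a * b * c - 2 * a^2 * d + u * c^2 + u * b * d)
       = d * l1^3 + b * l1^2 * l2 + c * d * l1 * f1 + b * c^3 * f1 + a * c^2 * d * f1 + a^2 * c^2 * f2"
      unfolding l1_def l2_def f1_def f2_def
      by (simp add: power2_eq_square power3_eq_cube algebra_simps)
    have nn: "0 \<le> l1" "0 \<le> l2" "0 \<le> f1" "0 \<le> f2"
      using assms unfolding l1_def l2_def f1_def f2_def by auto
    have "0 \<le> d * l1^3 + b * l1^2 * l2 + c * d * l1 * f1 + b * c^3 * f1 + a * c^2 * d * f1 + a^2 * c^2 * f2"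
      using nn assms by (intro add_nonneg_nonneg mult_nonneg_nonneg) auto
    then have "0 \<le> b^2 * c^2 * (b^3 - a * b * c - 2 * a^2 * d + u * c^2 + u * b * d)"
      using id by simp
    moreover have "0 < b^2 * c^2" using bp by simp
    ultimately show ?thesis by (simp add: zero_le_mult_iff)
  qed
qed

lemma bcad:
  fixes a b c d :: real
  assumes "0 \<le> a" "0 \<le> b" "0 \<le> c" "0 \<le> d"
    and L1: "a * c \<le> b^2" and L2: "b * d \<le> c^2"
    and Z: "b = 0 \<Longrightarrow> c = 0 \<Longrightarrow> a * d = 0"
  shows "a * d \<le> b * c"
proof -
  have i1: "b * (b * c - a * d) = c * (b^2 - a * c) + a * (c^2 - b * d)"
    by (simp add: power2_eq_square algebra_simps)
  have i2: "c * (b * c - a * d) = b * (c^2 - b * d) + d * (b^2 - a * c)"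
    by (simp add: power2_eq_square algebra_simps)
  have n1: "0 \<le> c * (b^2 - a * c) + a * (c^2 - b * d)" using assms by simp
  have n2: "0 \<le> b * (c^2 - b * d) + d * (b^2 - a * c)" using assms by simp
  show ?thesis
  proof (cases "b = 0")
    case False
    then have "0 < b" using assms by simp
    moreover have "0 \<le> b * (b * c - a * d)" using i1 n1 by simp
    ultimately show ?thesis by (simp add: zero_le_mult_iff)
  next
    case bz: True
    show ?thesis
    proof (cases "c = 0")
      case True then have "a = 0 \<or> d = 0" using Z bz by simp
      then show ?thesis using bz True by auto
    next
      case False
      then have "0 < c" using assms by simp
      moreover have "0 \<le> c * (b * c - a * d)" using i2 n2 by simp
      ultimately show ?thesis by (simp add: zero_le_mult_iff)
    qed
  qed
qed

lemma Inv_base: "Inv (\<lambda>k. if k = 0 then 1 else 0)"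
  unfolding Inv_def Fv_def by (auto simp: power2_eq_square)

lemma Inv_step:
  assumes I: "Inv g" and p: "0 \<le> p" "p \<le> 1"
  shows "Inv (\<lambda>k. (1 - p) * g k + p * g (k - 1))"
proof -
  define q where "q = 1 - p"
  have q: "0 \<le> q" "q \<le> 1" using p by (auto simp: q_def)
  define h where "h = (\<lambda>k. q * g k + p * g (k - 1))"
  have nn: "\<And>k. 0 \<le> g k" using I by (simp add: Inv_def)
  have iv: "\<And>i k j. i \<le> k \<Longrightarrow> k \<le> j \<Longrightarrow> 0 < g i \<Longrightarrow> 0 < g j \<Longrightarrow> 0 < g k"
    using I unfolding Inv_def by blast
  have lc: "\<And>k. g (k - 1) * g (k + 1) \<le> (g k)^2" using I by (simp add: Inv_def)
  have ff: "\<And>k. 0 \<le> Fv (g (k - 2)) (g (k - 1)) (g k) (g (k + 1))" using I by (simp add: Inv_def)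
  have hnn: "\<And>k. 0 \<le> h k" unfolding h_def using nn p q by simp
  have hiv: "0 < h k" if hi: "i \<le> k" "k \<le> j" "0 < h i" "0 < h j" for i k j
  proof (cases "p = 0")
    case True
    then show ?thesis using hi iv[of i k j] by (simp add: h_def q_def)
  next
    case pnz: False
    show ?thesis
    proof (cases "p = 1")
      case True
      then have "0 < g (i - 1)" "0 < g (j - 1)" using hi by (simp_all add: h_def q_def)
      then have "0 < g (k - 1)" using iv[of "i - 1" "k - 1" "j - 1"] hi by simp
      then show ?thesis using True by (simp add: h_def q_def)
    next
      case False
      then have pp: "0 < p" "0 < q" using p pnz by (auto simp: q_def)
      have pos: "0 < h x \<longleftrightarrow> 0 < g x \<or> 0 < g (x - 1)" for x
      proof
        assume "0 < h x"
        show "0 < g x \<or> 0 < g (x - 1)"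
        proof (rule ccontr)
          assume "\<not> (0 < g x \<or> 0 < g (x - 1))"
          then have "g x = 0" "g (x - 1) = 0" using nn[of x] nn[of "x - 1"] by auto
          then show False using \<open>0 < h x\<close> by (simp add: h_def)
        qed
      next
        assume "0 < g x \<or> 0 < g (x - 1)"
        then show "0 < h x" unfolding h_def using nn[of x] nn[of "x - 1"] pp
          by (auto intro: add_pos_nonneg add_nonneg_pos mult_pos_pos mult_nonneg_nonneg)
      qed
      have di: "0 < g i \<or> 0 < g (i - 1)" using hi(3) pos[of i] by simp
      obtain i' where i': "i' \<le> i" "0 < g i'"
      proof -
        from di show thesis
        proof
          assume "0 < g i" then show thesis using that[of i] by simp
        next
          assume "0 < g (i - 1)" then show thesis using that[of "i - 1"] by simp
        qed
      qed
      have dj: "0 < g j \<or> 0 < g (j - 1)" using hi(4) pos[of j] by simp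
      obtain j' where j': "j - 1 \<le> j'" "j' \<le> j" "0 < g j'"
      proof -
        from dj show thesis
        proof
          assume "0 < g j" then show thesis using that[of j] by simp
        next
          assume "0 < g (j - 1)" then show thesis using that[of "j - 1"] by simp
        qed
      qed
      show ?thesis
      proof (cases "k \<le> j'")
        case True
        then have "0 < g k" using iv[of i' k j'] i' j' hi by simp
        then show ?thesis using pos by simp
      next
        case False
        then have "k - 1 = j'" using j' hi by simp
        then show ?thesis using pos j' by simp
      qed
    qed
  qed
  have hlc: "h (k - 1) * h (k + 1) \<le> (h k)^2" for k
  proof -
    define a b c d where "a = g (k - 2)" and "b = g (k - 1)" and "c = g k" and "d = g (k + 1)"
    have hk: "h (k - 1) = q * b + p * a" "h k = q * c + p * b" "h (k + 1) = q * d + p * c"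
      unfolding h_def a_def b_def c_def d_def by (simp_all add: algebra_simps)
    have L1: "a * c \<le> b^2" using lc[of "k - 1"] unfolding a_def b_def c_def by (simp add: algebra_simps)
    have L2: "b * d \<le> c^2" using lc[of k] unfolding b_def c_def d_def by simp
    have ad: "a * d \<le> b * c"
    proof (rule bcad)
      show "0 \<le> a" "0 \<le> b" "0 \<le> c" "0 \<le> d" using nn by (simp_all add: a_def b_def c_def d_def)
      show "a * c \<le> b^2" "b * d \<le> c^2" by (fact L1, fact L2)
      assume "b = 0" "c = 0"
      show "a * d = 0"
      proof (rule ccontr)
        assume "a * d \<noteq> 0"
        then have "0 < a" "0 < d" using nn unfolding a_def d_def by (auto simp: less_le)
        then have "0 < b" using iv[of "k - 2" "k - 1" "k + 1"] unfolding a_def b_def d_def by simp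
        then show False using \<open>b = 0\<close> by simp
      qed
    qed
    have "(h k)^2 - h (k - 1) * h (k + 1) = q^2 * (c^2 - b * d) + p * q * (b * c - a * d) + p^2 * (b^2 - a * c)"
      unfolding hk by (simp add: power2_eq_square algebra_simps)
    moreover have "0 \<le> q^2 * (c^2 - b * d) + p * q * (b * c - a * d) + p^2 * (b^2 - a * c)"
      using L1 L2 ad p q by (intro add_nonneg_nonneg mult_nonneg_nonneg) auto
    ultimately show ?thesis by simp
  qed
  have hF: "0 \<le> Fv (h (k - 2)) (h (k - 1)) (h k) (h (k + 1))" for k
  proof -
    define u a b c d where "u = g (k - 3)" and "a = g (k - 2)" and "b = g (k - 1)" and "c = g k" and "d = g (k + 1)"
    have hk: "h (k - 2) = q * a + p * u" "h (k - 1) = q * b + p * a" "h k = q * c + p * b" "h (k + 1) = q * d + p * c"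
      unfolding h_def u_def a_def b_def c_def d_def by (simp_all add: algebra_simps)
    have gnn: "0 \<le> u" "0 \<le> a" "0 \<le> b" "0 \<le> c" "0 \<le> d" using nn by (simp_all add: u_def a_def b_def c_def d_def)
    have L1: "a * c \<le> b^2" using lc[of "k - 1"] unfolding a_def b_def c_def by (simp add: algebra_simps)
    have L2: "b * d \<le> c^2" using lc[of k] unfolding b_def c_def d_def by simp
    have F2: "0 \<le> b * c^2 - 2 * b^2 * d + a * c * d"
      using ff[of k] unfolding Fv_def a_def b_def c_def d_def by simp
    have F1: "0 \<le> a * b^2 - 2 * a^2 * c + u * b * c"
      using ff[of "k - 1"] unfolding Fv_def u_def a_def b_def c_def by (simp add: algebra_simps)
    have Z1: "a * d = 0" if "b = 0"
    proof (rule ccontr)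
      assume "a * d \<noteq> 0"
      then have "0 < a" "0 < d" using gnn by (auto simp: less_le)
      then have "0 < b" using iv[of "k - 2" "k - 1" "k + 1"] unfolding a_def b_def d_def by simp
      then show False using that by simp
    qed
    have Z2: "b * d = 0" if "c = 0"
    proof (rule ccontr)
      assume "b * d \<noteq> 0"
      then have "0 < b" "0 < d" using gnn by (auto simp: less_le)
      then have "0 < c" using iv[of "k - 1" "k" "k + 1"] unfolding b_def c_def d_def by simp
      then show False using that by simp
    qed
    have D1: "0 \<le> 2 * a * c^2 - 3 * a * b * d + u * c * d"
      using D1_nonneg[OF gnn F2 F1] .
    have D2: "0 \<le> b^3 - a * b * c - 2 * a^2 * d + u * c^2 + u * b * d"
      using D2_nonneg[OF gnn L1 L2 F2 F1 Z1 Z2] .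
    have "Fv (h (k - 2)) (h (k - 1)) (h k) (h (k + 1)) =
        q^3 * (b * c^2 - 2 * b^2 * d + a * c * d) + q^2 * p * (2 * a * c^2 - 3 * a * b * d + u * c * d)
        + q * p^2 * (b^3 - a * b * c - 2 * a^2 * d + u * c^2 + u * b * d)
        + p^3 * (a * b^2 - 2 * a^2 * c + u * b * c)"
      unfolding hk Fv_def by (simp add: power2_eq_square power3_eq_cube algebra_simps)
    moreover have "0 \<le> q^3 * (b * c^2 - 2 * b^2 * d + a * c * d) + q^2 * p * (2 * a * c^2 - 3 * a * b * d + u * c * d)
        + q * p^2 * (b^3 - a * b * c - 2 * a^2 * d + u * c^2 + u * b * d)
        + p^3 * (a * b^2 - 2 * a^2 * c + u * b * c)"
    proof -
      have t1: "0 \<le> q^3 * (b * c^2 - 2 * b^2 * d + a * c * d)"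
        by (rule mult_nonneg_nonneg[OF _ F2]) (simp add: q)
      have t2: "0 \<le> q^2 * p * (2 * a * c^2 - 3 * a * b * d + u * c * d)"
        by (rule mult_nonneg_nonneg[OF _ D1]) (simp add: q p)
      have t3: "0 \<le> q * p^2 * (b^3 - a * b * c - 2 * a^2 * d + u * c^2 + u * b * d)"
        by (rule mult_nonneg_nonneg[OF _ D2]) (simp add: q p)
      have t4: "0 \<le> p^3 * (a * b^2 - 2 * a^2 * c + u * b * c)"
        by (rule mult_nonneg_nonneg[OF _ F1]) (simp add: p)
      show ?thesis using t1 t2 t3 t4 by linarith
    qed
    ultimately show ?thesis by simp
  qed
  have "Inv h" unfolding Inv_def using hnn hiv hlc hF by blast
  then show ?thesis unfolding h_def q_def .
qed

lemma Inv_bsum: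
  assumes "\<forall>p\<in>set ps. 0 \<le> p \<and> p \<le> 1"
  shows "Inv (\<lambda>k. pmf (bernoulli_sum_pmf ps) k)"
  using assms
proof (induction ps)
  case Nil
  then show ?case using Inv_base by (simp add: bsum_Nil)
next
  case (Cons p ps)
  then have p: "0 \<le> p" "p \<le> 1" by auto
  have "Inv (\<lambda>k. (1 - p) * pmf (bernoulli_sum_pmf ps) k + p * pmf (bernoulli_sum_pmf ps) (k - 1))"
    using Inv_step[OF _ p] Cons by auto
  then show ?case using bsum_Cons[OF p] by simp
qed

theorem theoremA2:
  fixes ps :: "real list" and k :: int
  assumes "length ps \<ge> 1"
    and "\<forall>p\<in>set ps. 0 \<le> p \<and> p \<le> 1"
  shows "pmf (bernoulli_sum_pmf ps) (k - 1) * (pmf (bernoulli_sum_pmf ps) k)^2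
         - 2 * (pmf (bernoulli_sum_pmf ps) (k - 1))^2 * pmf (bernoulli_sum_pmf ps) (k + 1)
         + pmf (bernoulli_sum_pmf ps) k * pmf (bernoulli_sum_pmf ps) (k + 1)
           * pmf (bernoulli_sum_pmf ps) (k - 2) \<ge> 0"
proof -
  have "Inv (\<lambda>k. pmf (bernoulli_sum_pmf ps) k)" using Inv_bsum assms(2) .
  then have "0 \<le> Fv (pmf (bernoulli_sum_pmf ps) (k - 2)) (pmf (bernoulli_sum_pmf ps) (k - 1))
       (pmf (bernoulli_sum_pmf ps) k) (pmf (bernoulli_sum_pmf ps) (k + 1))"
    unfolding Inv_def by blast
  then show ?thesis unfolding Fv_def by (simp add: algebra_simps)
qed

end
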